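(* Let $Q=\{(x,y)\in\mathbb R^2: x,y>0\}$, identified with the interior $\{[x:y:1]:x,y>0\}$ of a triangle in ${\mathbb RP}^2$, with its Hilbert metric $d_Q(b,c)=|\log cr(a,b,c,d)|$. Then the Hilbert area form on $Q$ is $$\omega_Q=\frac{dx\,dy}{xy}.$$
   Context: Hilbert metric on a properly convex open set $\Omega$: for $b,c\in\Omega$ let the projective line through them meet $\partial\Omega$ at $a,d$ with $a,b,c,d$ in order; $d_\Omega(b,c)=|\log cr(a,b,c,d)|$ with $cr(y_1,y_2,y_3,y_4)=\frac{(y_1-y_3)(y_2-y_4)}{(y_1-y_2)(y_3-y_4)}$ (here without the factor $1/2$). This is a Finsler metric. The p-area of a 2-dimensional normed space $(V,\|\cdot\|)$ is $K^{-1}\lambda$ where $\lambda$ is Lebesgue measure from an inner product and $K$ is the supremum of $\lambda$-areas of parallelograms spanned by two vectors of norm $\le1$. The Hilbert area form is the p-area of the Hilbert Finsler norm on each tangent space. *)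

theory Defs
  imports "HOL-Analysis.Analysis"
begin

text \<open>Points of the affine chart R^2 = {[x:y:1]} of RP^2 are pairs of reals.\<close>

definition quadrant :: "(real \<times> real) set" where
  "quadrant = {(x, y). x > 0 \<and> y > 0}"

text \<open>Affine parametrisation of the projective line through b and c (parameter 0 is b,
  parameter 1 is c, and parameter +-infinity is the point of the line at infinity).\<close>

definition line_pt :: "real \<times> real \<Rightarrow> real \<times> real \<Rightarrow> real \<Rightarrow> real \<times> real" where
  "line_pt b c t = b + t *\<^sub>R (c - b)"

text \<open>Parameters of the boundary points a (on the side of b) and d (on the side of c)
  of the convex open set Omega on the line through b and c; the value +-infinity means the
  boundary point is the point at infinity of the line.\<close>

definition bd_param_a :: "(real \<times> real) set \<Rightarrow> real \<times> real \<Rightarrow> real \<times> real \<Rightarrow> ereal" where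
  "bd_param_a \<Omega> b c = Inf {ereal t | t. line_pt b c t \<in> \<Omega>}"

definition bd_param_d :: "(real \<times> real) set \<Rightarrow> real \<times> real \<Rightarrow> real \<times> real \<Rightarrow> ereal" where
  "bd_param_d \<Omega> b c = Sup {ereal t | t. line_pt b c t \<in> \<Omega>}"

definition cross_ratio :: "real \<Rightarrow> real \<Rightarrow> real \<Rightarrow> real \<Rightarrow> real" where
  "cross_ratio y1 y2 y3 y4 = ((y1 - y3) * (y2 - y4)) / ((y1 - y2) * (y3 - y4))"

text \<open>cr(a,b,c,d) with b = 0, c = 1 in the line parameter; it factors as
  ((a-1)/a) * (d/(d-1)), and a factor whose point is the point at infinity of the line
  is replaced by its limit value 1 (projective invariance / continuity of the cross ratio).\<close>

definition hilbert_cr :: "(real \<times> real) set \<Rightarrow> real \<times> real \<Rightarrow> real \<times> real \<Rightarrow> real" where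
  "hilbert_cr \<Omega> b c =
     (let ta = bd_param_a \<Omega> b c; td = bd_param_d \<Omega> b c;
          fa = (if ta = -\<infinity> then 1 else (real_of_ereal ta - 1) / real_of_ereal ta);
          fd = (if td = \<infinity> then 1 else real_of_ereal td / (real_of_ereal td - 1))
      in fa * fd)"


definition hilbert_dist :: "(real \<times> real) set \<Rightarrow> real \<times> real \<Rightarrow> real \<times> real \<Rightarrow> real" where
  "hilbert_dist \<Omega> b c = \<bar>ln (hilbert_cr \<Omega> b c)\<bar>"

definition hilbert_norm :: "(real \<times> real) set \<Rightarrow> real \<times> real \<Rightarrow> real \<times> real \<Rightarrow> real" where
  "hilbert_norm \<Omega> p v = Lim (at_right 0) (\<lambda>t. hilbert_dist \<Omega> p (p + t *\<^sub>R v) / t)"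

definition p_area_K :: "(real \<times> real \<Rightarrow> real) \<Rightarrow> real" where
  "p_area_K N = Sup {\<bar>fst u * snd v - snd u * fst v\<bar> | u v. N u \<le> 1 \<and> N v \<le> 1}"

definition p_area :: "(real \<times> real \<Rightarrow> real) \<Rightarrow> (real \<times> real) measure" where
  "p_area N = scale_measure (ennreal (1 / p_area_K N)) lborel"

end

theory Submission
  imports Defs
begin

lemma conv2: fixes l m u w :: real
  assumes "l \<ge> 0" "m \<ge> 0" "l + m \<le> 1" "u \<le> 1" "w \<le> 1"
  shows "l*u + m*w \<le> 1"
proof -
  have "l*u \<le> l" using assms mult_left_mono[of u 1 l] by simp
  moreover have "m*w \<le> m" using assms mult_left_mono[of w 1 m] by simp
  ultimately show ?thesis using assms by linarith
qed

lemma hex1: fixes a1 a2 b1 b2 :: real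
  assumes "\<bar>a1\<bar> \<le> 1" "\<bar>a2\<bar> \<le> 1" "\<bar>a1-a2\<bar> \<le> 1" "\<bar>b1\<bar> \<le> 1" "\<bar>b2\<bar> \<le> 1" "\<bar>b1-b2\<bar> \<le> 1"
  shows "a1*b2 - a2*b1 \<le> 1"
proof -
  have e: "a1*b2 - a2*b1 = l*u + m*w \<Longrightarrow> l \<ge> 0 \<Longrightarrow> m \<ge> 0 \<Longrightarrow> l + m \<le> 1 \<Longrightarrow> u \<le> 1 \<Longrightarrow> w \<le> 1 \<Longrightarrow> a1*b2 - a2*b1 \<le> 1" for l m u w
    using conv2[of l m u w] by simp
  consider "b1 \<ge> b2" "b2 \<ge> 0" | "b2 \<ge> b1" "b1 \<ge> 0" | "b2 \<ge> 0" "0 \<ge> b1"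
    | "0 \<ge> b2" "b2 \<ge> b1" | "0 \<ge> b1" "b1 \<ge> b2" | "b1 \<ge> 0" "0 \<ge> b2" by linarith
  then show ?thesis
  proof cases
    case 1 show ?thesis by (rule e[of "b1-b2" "-a2" b2 "a1-a2"]) (use 1 assms in \<open>auto simp: algebra_simps\<close>)
  next
    case 2 show ?thesis by (rule e[of b1 "a1-a2" "b2-b1" a1]) (use 2 assms in \<open>auto simp: algebra_simps\<close>)
  next
    case 3 show ?thesis by (rule e[of b2 a1 "-b1" a2]) (use 3 assms in \<open>auto simp: algebra_simps\<close>)
  next
    case 4 show ?thesis by (rule e[of "b2-b1" a2 "-b2" "a2-a1"]) (use 4 assms in \<open>auto simp: algebra_simps\<close>)
  next
    case 5 show ?thesis by (rule e[of "-b1" "a2-a1" "b1-b2" "-a1"]) (use 5 assms in \<open>auto simp: algebra_simps\<close>)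
  next
    case 6 show ?thesis by (rule e[of "-b2" "-a1" b1 "-a2"]) (use 6 assms in \<open>auto simp: algebra_simps\<close>)
  qed
qed

lemma hex: fixes a1 a2 b1 b2 :: real
  assumes "\<bar>a1\<bar> \<le> 1" "\<bar>a2\<bar> \<le> 1" "\<bar>a1-a2\<bar> \<le> 1" "\<bar>b1\<bar> \<le> 1" "\<bar>b2\<bar> \<le> 1" "\<bar>b1-b2\<bar> \<le> 1"
  shows "\<bar>a1*b2 - a2*b1\<bar> \<le> 1"
  using hex1[OF assms] hex1[of b1 b2 a1 a2] assms by (auto simp: abs_le_iff algebra_simps)

lemma maxeq: fixes r a1 a2 :: real
  shows "(1 + r*a1 > 0 \<and> 1 + r*a2 > 0) \<longleftrightarrow> (1 + r*max 0 (max a1 a2) > 0 \<and> 1 - r*max 0 (max (-a1) (-a2)) > 0)"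
proof (cases "r \<ge> 0")
  case True
  then show ?thesis by (auto simp: max_def mult_left_mono mult_left_mono_neg) (smt (verit) mult_left_mono mult_nonneg_nonneg)+
next
  case False
  then show ?thesis by (auto simp: max_def) (smt (verit) mult_left_mono_neg mult_nonpos_nonpos mult_pos_neg)+
qed


lemma inf_S:
  fixes c d :: real assumes c: "c \<ge> 0" and d: "d \<ge> 0"
  shows "Inf (ereal ` {t. 1 + t*c > 0 \<and> 1 - t*d > 0}) = (if c = 0 then -\<infinity> else ereal (-1/c))"
proof -
  let ?S = "{t. 1 + t*c > 0 \<and> 1 - t*d > 0}"
  have neg: "t \<le> 0 \<Longrightarrow> 1 - t*d > 0" for t using d by (smt (verit) mult_nonpos_nonneg)
  show ?thesis
  proof (cases "c = 0")
    case True
    have mem: "t \<le> 0 \<Longrightarrow> t \<in> ?S" for t using True neg by simp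
    have "Inf (ereal ` ?S) = -\<infinity>"
    proof (cases "Inf (ereal ` ?S)")
      case (real r)
      have "min (r-1) 0 \<in> ?S" by (rule mem) simp
      then have "Inf (ereal ` ?S) \<le> ereal (min (r-1) 0)" by (intro Inf_lower) (rule imageI)
      then show ?thesis using real by simp
    next
      case PInf
      have "Inf (ereal ` ?S) \<le> ereal 0" by (intro Inf_lower) (use mem in auto)
      then show ?thesis using PInf by simp
    qed simp
    then show ?thesis using True by simp
  next
    case False
    then have cp: "c > 0" using c by simp
    define k where "k = -1/c"
    have k0: "k < 0" using cp by (simp add: k_def)
    have S: "t \<in> ?S \<Longrightarrow> t > k" for t using cp by (simp add: field_simps k_def)
    have mem: "k < t \<Longrightarrow> t \<le> 0 \<Longrightarrow> t \<in> ?S" for t using cp neg[of t] by (simp add: field_simps k_def)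
    have ne: "?S \<noteq> {}" proof -
      have "(0::real) \<in> ?S" by simp
      then show ?thesis by blast
    qed
    have bdd: "bdd_below ?S" using S by (meson bdd_below.I less_imp_le)
    have "Inf ?S = k"
    proof (rule antisym)
      show "k \<le> Inf ?S" by (rule cInf_greatest[OF ne]) (use S in force)
      show "Inf ?S \<le> k"
      proof (rule ccontr)
        assume "\<not> Inf ?S \<le> k"
        then have m: "Inf ?S > k" by simp
        define mi where "mi = Inf ?S"
        define t where "t = (k + min mi 0)/2"
        have mm: "min mi 0 > k" "min mi 0 \<le> 0" "min mi 0 \<le> mi" using m k0 by (auto simp: mi_def)
        have "k < t" using mm unfolding t_def by (simp add: field_simps)
        have "t \<le> 0" using mm k0 unfolding t_def by (simp add: field_simps)
        note \<open>k < t\<close> \<open>t \<le> 0\<close>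
        then have "t \<in> ?S" by (rule mem)
        then have "Inf ?S \<le> t" using bdd by (rule cInf_lower)
        moreover have "t < mi" using mm unfolding t_def by (auto simp: field_simps min_def)
        then have "t < Inf ?S" by (simp add: mi_def)
        ultimately show False by simp
      qed
    qed
    then have "Inf ?S = -1/c" by (simp add: k_def)
    then have "Inf (ereal ` ?S) = ereal (-1/c)" using ereal_Inf'[OF bdd ne] by simp
    then show ?thesis using False by simp
  qed
qed

lemma sup_S:
  fixes c d :: real assumes c: "c \<ge> 0" and d: "d \<ge> 0"
  shows "Sup (ereal ` {t. 1 + t*c > 0 \<and> 1 - t*d > 0}) = (if d = 0 then \<infinity> else ereal (1/d))"
proof -
  have e: "uminus ` ereal ` {t. 1 + t*c > 0 \<and> 1 - t*d > 0} = ereal ` {t. 1 + t*d > 0 \<and> 1 - t*c > 0}"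
    apply (auto simp: image_iff)
    apply (rule_tac x="- xa" in exI)
    apply (auto simp: algebra_simps)
    done
  have "Sup (ereal ` {t. 1 + t*c > 0 \<and> 1 - t*d > 0}) = - Inf (uminus ` ereal ` {t. 1 + t*c > 0 \<and> 1 - t*d > 0})"
    by (simp add: ereal_Inf_uminus_image_eq)
  also have "\<dots> = - Inf (ereal ` {t. 1 + t*d > 0 \<and> 1 - t*c > 0})" using e by simp
  finally show ?thesis using inf_S[OF d c] by simp
qed


definition hA :: "real \<Rightarrow> real \<Rightarrow> real \<times> real \<Rightarrow> real" where
  "hA x y v = max 0 (max (fst v / x) (snd v / y))"
definition hB :: "real \<Rightarrow> real \<Rightarrow> real \<times> real \<Rightarrow> real" where
  "hB x y v = max 0 (max (- (fst v / x)) (- (snd v / y)))"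

lemma hA_nonneg: "hA x y v \<ge> 0" by (simp add: hA_def)
lemma hB_nonneg: "hB x y v \<ge> 0" by (simp add: hB_def)

lemma pos_div_eq: fixes x r a :: real assumes "x > 0"
  shows "x + r * a > 0 \<longleftrightarrow> 1 + r * (a / x) > 0"
proof -
  have "x + r * a = x * (1 + r * (a / x))" using assms by (simp add: field_simps)
  then show ?thesis using assms by (simp add: zero_less_mult_iff)
qed

lemma set_eq:
  assumes x: "x > 0" and y: "y > 0"
  shows "{ereal t | t. line_pt (x,y) ((x,y) + s *\<^sub>R v) t \<in> quadrant}
       = ereal ` {t. 1 + t * (s * hA x y v) > 0 \<and> 1 - t * (s * hB x y v) > 0}"
proof -
  have e1: "line_pt (x,y) ((x,y) + s *\<^sub>R v) t \<in> quadrant \<longleftrightarrow>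
        (1 + (t * s)*(fst v/x) > 0 \<and> 1 + (t * s)*(snd v/y) > 0)" for t
  proof -
    have "line_pt (x,y) ((x,y) + s *\<^sub>R v) t = (x + (t * s) * fst v, y + (t * s) * snd v)"
      by (cases v) (simp add: line_pt_def algebra_simps)
    moreover have "x + (t * s) * fst v > 0 \<longleftrightarrow> 1 + (t * s)*(fst v/x) > 0" using x by (rule pos_div_eq)
    moreover have "y + (t * s) * snd v > 0 \<longleftrightarrow> 1 + (t * s)*(snd v/y) > 0" using y by (rule pos_div_eq)
    ultimately show ?thesis by (simp add: quadrant_def)
  qed
  have e2: "(1 + (t * s)*(fst v/x) > 0 \<and> 1 + (t * s)*(snd v/y) > 0) \<longleftrightarrow> 1 + t * (s * hA x y v) > 0 \<and> 1 - t * (s * hB x y v) > 0" for t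
    unfolding maxeq hA_def hB_def by (simp add: mult.assoc)
  show ?thesis using e1 e2 by blast
qed



lemma cr_eq:
  assumes x: "x > 0" and y: "y > 0" and s: "s > 0" and sb: "s * hB x y v < 1"
  shows "hilbert_cr quadrant (x,y) ((x,y) + s *\<^sub>R v) = (1 + s * hA x y v) / (1 - s * hB x y v)"
proof -
  define c where "c = s * hA x y v"
  define d where "d = s * hB x y v"
  have c0: "c \<ge> 0" using s hA_nonneg by (simp add: c_def)
  have d0: "d \<ge> 0" using s hB_nonneg by (simp add: d_def)
  have d1: "d < 1" using sb by (simp add: d_def)
  have ta: "bd_param_a quadrant (x,y) ((x,y) + s *\<^sub>R v) = (if c = 0 then -\<infinity> else ereal (-1/c))"
    unfolding bd_param_a_def set_eq[OF x y] c_def[symmetric] d_def[symmetric] by (rule inf_S[OF c0 d0])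
  have td: "bd_param_d quadrant (x,y) ((x,y) + s *\<^sub>R v) = (if d = 0 then \<infinity> else ereal (1/d))"
    unfolding bd_param_d_def set_eq[OF x y] c_def[symmetric] d_def[symmetric] by (rule sup_S[OF c0 d0])
  have fa: "(if c = 0 then 1 else (-1/c - 1) / (-1/c)) = 1 + c"
    by (auto simp: field_simps)
  have fd: "(if d = 0 then 1 else (1/d) / (1/d - 1)) = 1 / (1 - d)"
    using d1 by (auto simp: field_simps)
  have "hilbert_cr quadrant (x,y) ((x,y) + s *\<^sub>R v) = (1 + c) * (1 / (1 - d))"
    unfolding hilbert_cr_def Let_def ta td using fa fd
    by (cases "c = 0"; cases "d = 0") simp_all
  then show ?thesis by (simp add: c_def d_def)
qed

lemma norm_eq:
  assumes x: "x > 0" and y: "y > 0"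
  shows "hilbert_norm quadrant (x,y) v = hA x y v + hB x y v"
proof -
  let ?A = "hA x y v" and ?B = "hB x y v"
  define f where "f s = ln (1 + s * ?A) - ln (1 - s * ?B)" for s
  have der: "(f has_field_derivative (?A + ?B)) (at 0 within {0<..})"
    unfolding f_def by (auto intro!: derivative_eq_intros)
  then have lim: "((\<lambda>s. (f s - f 0) / (s - 0)) \<longlongrightarrow> ?A + ?B) (at_right 0)"
    using has_field_derivative_iff by blast
  have ev: "eventually (\<lambda>s. (f s - f 0) / (s - 0) = hilbert_dist quadrant (x,y) ((x,y) + s *\<^sub>R v) / s) (at_right 0)"
    unfolding eventually_at_right_field
  proof (intro exI[of _ "1 / (?B + 1)"] conjI allI impI)
    show "0 < 1 / (?B + 1)" using hB_nonneg[of x y v] by simp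
  next
    fix s :: real assume s: "0 < s" "s < 1 / (?B + 1)"
    have B0: "?B \<ge> 0" by (rule hB_nonneg)
    have A0: "?A \<ge> 0" by (rule hA_nonneg)
    have "s * (?B + 1) < 1" using s B0 by (simp add: field_simps)
    then have sb: "s * ?B < 1" using s by (simp add: algebra_simps)
    have p1: "1 + s * ?A > 0" using s A0 by (simp add: add_pos_nonneg)
    have p2: "1 - s * ?B > 0" using sb by simp
    have le: "1 - s * ?B \<le> 1 + s * ?A" proof -
      have "s * ?A \<ge> 0" "s * ?B \<ge> 0" using s A0 B0 by simp_all
      then show ?thesis by linarith
    qed
    have "hilbert_dist quadrant (x,y) ((x,y) + s *\<^sub>R v) = \<bar>ln ((1 + s * ?A) / (1 - s * ?B))\<bar>"
      unfolding hilbert_dist_def cr_eq[OF x y s(1) sb] ..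
    also have "\<dots> = f s" unfolding f_def using p1 p2 le
      by (simp add: ln_div)
    finally show "(f s - f 0) / (s - 0) = hilbert_dist quadrant (x,y) ((x,y) + s *\<^sub>R v) / s"
      by (simp add: f_def)
  qed
  have "((\<lambda>s. hilbert_dist quadrant (x,y) ((x,y) + s *\<^sub>R v) / s) \<longlongrightarrow> ?A + ?B) (at_right 0)"
    using tendsto_cong[OF ev] lim by blast
  then show ?thesis unfolding hilbert_norm_def
    using tendsto_Lim trivial_limit_at_right_real by blast
qed



lemma N_bounds:
  assumes "hA x y u + hB x y u \<le> 1"
  shows "\<bar>fst u / x\<bar> \<le> 1" "\<bar>snd u / y\<bar> \<le> 1" "\<bar>fst u / x - snd u / y\<bar> \<le> 1"
proof -
  have a: "fst u / x \<le> hA x y u" "snd u / y \<le> hA x y u" "0 \<le> hA x y u" by (auto simp: hA_def)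
  have b: "- (fst u / x) \<le> hB x y u" "- (snd u / y) \<le> hB x y u" "0 \<le> hB x y u" by (auto simp: hB_def)
  show "\<bar>fst u / x\<bar> \<le> 1" "\<bar>snd u / y\<bar> \<le> 1" "\<bar>fst u / x - snd u / y\<bar> \<le> 1"
    using a b assms by linarith+
qed

lemma K_eq:
  assumes x: "x > 0" and y: "y > 0"
  shows "p_area_K (\<lambda>v. hA x y v + hB x y v) = x * y"
  unfolding p_area_K_def
proof (rule cSup_eq_maximum)
  have "hA x y (x,0) + hB x y (x,0) = 1" using x by (simp add: hA_def hB_def)
  moreover have "hA x y (0,y) + hB x y (0,y) = 1" using y by (simp add: hA_def hB_def)
  moreover have "\<bar>fst (x,0) * snd (0,y) - snd (x,0) * fst (0::real,y)\<bar> = x * y" using x y by simp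
  ultimately show "x * y \<in> {\<bar>fst u * snd v - snd u * fst v\<bar> |u v. hA x y u + hB x y u \<le> 1 \<and> hA x y v + hB x y v \<le> 1}"
    by (smt (verit, best) mem_Collect_eq)
next
  fix z assume "z \<in> {\<bar>fst u * snd v - snd u * fst v\<bar> |u v. hA x y u + hB x y u \<le> 1 \<and> hA x y v + hB x y v \<le> 1}"
  then obtain u v where z: "z = \<bar>fst u * snd v - snd u * fst v\<bar>" and u: "hA x y u + hB x y u \<le> 1"
    and v: "hA x y v + hB x y v \<le> 1" by blast
  have h: "\<bar>(fst u / x) * (snd v / y) - (snd u / y) * (fst v / x)\<bar> \<le> 1"
    by (rule hex) (use N_bounds[OF u] N_bounds[OF v] in auto)
  have "fst u * snd v - snd u * fst v = (x * y) * ((fst u / x) * (snd v / y) - (snd u / y) * (fst v / x))"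
    using x y by (simp add: field_simps)
  then have "z = (x * y) * \<bar>(fst u / x) * (snd v / y) - (snd u / y) * (fst v / x)\<bar>"
    using x y z by (simp add: abs_mult)
  also have "\<dots> \<le> (x * y) * 1" using h x y by (intro mult_left_mono) auto
  finally show "z \<le> x * y" by simp
qed

theorem lemma2p4:
  fixes x y :: real
  assumes "(x, y) \<in> quadrant"
  shows "p_area (hilbert_norm quadrant (x, y)) = scale_measure (ennreal (1 / (x * y))) lborel"
proof -
  have x: "x > 0" and y: "y > 0" using assms by (auto simp: quadrant_def)
  have "hilbert_norm quadrant (x, y) = (\<lambda>v. hA x y v + hB x y v)"
    using norm_eq[OF x y] by blast
  then show ?thesis unfolding p_area_def using K_eq[OF x y] by simp
qed

end
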